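(* Let $Q$ be an $s\times t$ real matrix with $s\le t$, let $T$ be a maximal transversal of $Q$ (i.e. $|T|={\rm tdet}(Q)$), and let $a$ be an entry of $T$. Let $R$ be the sum of the entries in the row of $Q$ containing $a$ and $C$ the sum of the entries in the column of $Q$ containing $a$. Then $$R+C\le {\rm tdet}(Q)+t\,a.$$
   Context: For an $s\times t$ matrix $Q=(a_{ij})$ with $s\le t$, a transversal of $Q$ is a set of entries $T=\{a_{1i_1},\dots,a_{si_s}\}$ with $i_1,\dots,i_s\in\{1,\dots,t\}$ pairwise distinct, and $|T|=a_{1i_1}+\cdots+a_{si_s}$. The tropical determinant is ${\rm tdet}(Q)=\max_T|T|$ over all transversals $T$ of $Q$. *)

theory Defs
  imports Complex_Main
begin

text \<open>An s x t real matrix is represented as Q :: nat => nat => real, with rows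
  indexed by {..<s} and columns by {..<t}. A transversal is given by an injective
  choice of columns sigma : {..<s} -> {..<t}; its weight is the sum of the chosen entries.\<close>

definition is_transversal :: "nat \<Rightarrow> nat \<Rightarrow> (nat \<Rightarrow> nat) \<Rightarrow> bool" where
  "is_transversal s t \<sigma> \<longleftrightarrow> inj_on \<sigma> {..<s} \<and> \<sigma> ` {..<s} \<subseteq> {..<t}"

definition transversal_weight :: "(nat \<Rightarrow> nat \<Rightarrow> real) \<Rightarrow> nat \<Rightarrow> (nat \<Rightarrow> nat) \<Rightarrow> real" where
  "transversal_weight Q s \<sigma> = (\<Sum>i<s. Q i (\<sigma> i))"

definition tdet :: "(nat \<Rightarrow> nat \<Rightarrow> real) \<Rightarrow> nat \<Rightarrow> nat \<Rightarrow> real" where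
  "tdet Q s t = Max {transversal_weight Q s \<sigma> | \<sigma>. is_transversal s t \<sigma>}"

end

theory Submission
  imports Defs "HOL-Library.FuncSet"
begin

lemma tw_finite: "finite {transversal_weight Q s \<sigma> | \<sigma>. is_transversal s t \<sigma>}"
proof (rule finite_subset)
  show "{transversal_weight Q s \<sigma> | \<sigma>. is_transversal s t \<sigma>}
        \<subseteq> (\<lambda>f. transversal_weight Q s f) ` ({..<s} \<rightarrow>\<^sub>E {..<t})"
  proof
    fix x assume "x \<in> {transversal_weight Q s \<sigma> | \<sigma>. is_transversal s t \<sigma>}"
    then obtain \<sigma> where x: "x = transversal_weight Q s \<sigma>" and tr: "is_transversal s t \<sigma>" by blast
    have "restrict \<sigma> {..<s} \<in> {..<s} \<rightarrow>\<^sub>E {..<t}" using tr unfolding is_transversal_def by auto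
    moreover have "transversal_weight Q s (restrict \<sigma> {..<s}) = x"
      unfolding x transversal_weight_def by (rule sum.cong) auto
    ultimately show "x \<in> (\<lambda>f. transversal_weight Q s f) ` ({..<s} \<rightarrow>\<^sub>E {..<t})" by force
  qed
qed (simp add: finite_PiE)

lemma tw_le: "is_transversal s t \<tau> \<Longrightarrow> transversal_weight Q s \<tau> \<le> tdet Q s t"
  unfolding tdet_def by (rule Max_ge[OF tw_finite]) blast

lemma tw_diff:
  assumes "D \<subseteq> {..<s}" "\<And>x. x \<notin> D \<Longrightarrow> \<tau> x = \<sigma> x"
  shows "transversal_weight Q s \<tau> - transversal_weight Q s \<sigma> = (\<Sum>x\<in>D. Q x (\<tau> x) - Q x (\<sigma> x))"
proof -
  have "transversal_weight Q s \<tau> - transversal_weight Q s \<sigma> = (\<Sum>x<s. Q x (\<tau> x) - Q x (\<sigma> x))"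
    unfolding transversal_weight_def by (simp add: sum_subtractf)
  also have "\<dots> = (\<Sum>x\<in>D. Q x (\<tau> x) - Q x (\<sigma> x))"
    by (rule sum.mono_neutral_right) (use assms in auto)
  finally show ?thesis .
qed

theorem lemma2p2:
  fixes Q :: "nat \<Rightarrow> nat \<Rightarrow> real" and s t :: nat and \<sigma> :: "nat \<Rightarrow> nat" and i :: nat
  assumes "s \<le> t"
    and "is_transversal s t \<sigma>"
    and "transversal_weight Q s \<sigma> = tdet Q s t"
    and "i < s"
  shows "(\<Sum>j<t. Q i j) + (\<Sum>k<s. Q k (\<sigma> i)) \<le> tdet Q s t + real t * Q i (\<sigma> i)"
proof -
  define c where "c = \<sigma> i"
  define W where "W = transversal_weight Q s \<sigma>"
  have inj: "inj_on \<sigma> {..<s}" and img: "\<sigma> ` {..<s} \<subseteq> {..<t}"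
    using assms(2) unfolding is_transversal_def by auto
  have A: "Q i (\<sigma> k) + Q k c \<le> Q i c + Q k (\<sigma> k)" if k: "k \<in> {..<s} - {i}" for k
  proof -
    define \<tau> where "\<tau> = \<sigma>(i := \<sigma> k, k := c)"
    have "is_transversal s t \<tau>"
      unfolding is_transversal_def
    proof
      show "inj_on \<tau> {..<s}"
        unfolding inj_on_def \<tau>_def c_def using k assms(4) inj_on_eq_iff[OF inj] by (auto split: if_splits)
      show "\<tau> ` {..<s} \<subseteq> {..<t}" unfolding \<tau>_def c_def using k assms(4) img by auto
    qed
    hence "transversal_weight Q s \<tau> \<le> W" using tw_le assms(3) W_def by metis
    moreover have "transversal_weight Q s \<tau> - W = (\<Sum>x\<in>{i,k}. Q x (\<tau> x) - Q x (\<sigma> x))"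
      unfolding W_def by (rule tw_diff) (use k assms(4) in \<open>auto simp: \<tau>_def\<close>)
    moreover have "(\<Sum>x\<in>{i,k}. Q x (\<tau> x) - Q x (\<sigma> x)) = Q i (\<sigma> k) - Q i c + Q k c - Q k (\<sigma> k)"
      using k by (simp add: \<tau>_def c_def)
    ultimately show ?thesis by linarith
  qed
  have B: "Q i j \<le> Q i c" if j: "j \<in> {..<t} - \<sigma> ` {..<s}" for j
  proof -
    define \<tau> where "\<tau> = \<sigma>(i := j)"
    have "is_transversal s t \<tau>"
      unfolding is_transversal_def
    proof
      show "inj_on \<tau> {..<s}"
        unfolding inj_on_def \<tau>_def using j assms(4) img by (auto simp: inj_on_eq_iff[OF inj] split: if_splits)
      show "\<tau> ` {..<s} \<subseteq> {..<t}" unfolding \<tau>_def using j assms(4) img by auto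
    qed
    hence "transversal_weight Q s \<tau> \<le> W" using tw_le assms(3) W_def by metis
    moreover have "transversal_weight Q s \<tau> - W = (\<Sum>x\<in>{i}. Q x (\<tau> x) - Q x (\<sigma> x))"
      unfolding W_def by (rule tw_diff) (use assms(4) in \<open>auto simp: \<tau>_def\<close>)
    ultimately show ?thesis by (simp add: \<tau>_def c_def)
  qed
  have sA: "(\<Sum>k\<in>{..<s}-{i}. Q i (\<sigma> k) + Q k c) \<le> (\<Sum>k\<in>{..<s}-{i}. Q i c + Q k (\<sigma> k))"
    by (rule sum_mono) (rule A)
  have sB: "(\<Sum>j\<in>{..<t} - \<sigma> ` {..<s}. Q i j) \<le> (\<Sum>j\<in>{..<t} - \<sigma> ` {..<s}. Q i c)"
    by (rule sum_mono) (rule B)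
  have cardB: "card ({..<t} - \<sigma> ` {..<s}) = t - s"
    using card_Diff_subset[OF _ img] card_image[OF inj] by simp
  have cardA: "card ({..<s} - {i}) = s - 1" using assms(4) by simp
  have R: "(\<Sum>j<t. Q i j) = (\<Sum>j\<in>\<sigma> ` {..<s}. Q i j) + (\<Sum>j\<in>{..<t} - \<sigma> ` {..<s}. Q i j)"
    using sum.subset_diff[OF img] by (simp add: add.commute)
  have R2: "(\<Sum>j\<in>\<sigma> ` {..<s}. Q i j) = (\<Sum>k<s. Q i (\<sigma> k))"
    using sum.reindex[OF inj] by simp
  have split: "\<And>f. (\<Sum>k<s. f k) = f i + (\<Sum>k\<in>{..<s}-{i}. f k :: real)"
    using assms(4) by (simp add: sum.remove)
  have Wd: "W = (\<Sum>k<s. Q k (\<sigma> k))" unfolding W_def transversal_weight_def ..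
  have ts: "real (t - s) + real (s - 1) = real t - 1" using assms(1,4) by linarith
  have e1: "(\<Sum>k\<in>{..<s}-{i}. Q i (\<sigma> k) + Q k c) = (\<Sum>k\<in>{..<s}-{i}. Q i (\<sigma> k)) + (\<Sum>k\<in>{..<s}-{i}. Q k c)"
    by (rule sum.distrib)
  have e2: "(\<Sum>k\<in>{..<s}-{i}. Q i c + Q k (\<sigma> k)) = real (s - 1) * Q i c + (\<Sum>k\<in>{..<s}-{i}. Q k (\<sigma> k))"
    using cardA by (simp add: sum.distrib)
  have e3: "(\<Sum>j\<in>{..<t} - \<sigma> ` {..<s}. Q i c) = real (t - s) * Q i c"
    using cardB by simp
  have s1: "(\<Sum>k<s. Q i (\<sigma> k)) = Q i c + (\<Sum>k\<in>{..<s}-{i}. Q i (\<sigma> k))"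
    using split[of "\<lambda>k. Q i (\<sigma> k)"] by (simp add: c_def)
  have s2: "(\<Sum>k<s. Q k (\<sigma> i)) = Q i c + (\<Sum>k\<in>{..<s}-{i}. Q k c)"
    using split[of "\<lambda>k. Q k c"] by (simp add: c_def)
  have s3: "W = Q i c + (\<Sum>k\<in>{..<s}-{i}. Q k (\<sigma> k))"
    using split[of "\<lambda>k. Q k (\<sigma> k)"] Wd by (simp add: c_def)
  have tt: "real t * Q i c = real (t - s) * Q i c + real (s - 1) * Q i c + Q i c"
    using ts by (simp add: algebra_simps)
  show ?thesis
    using sA sB e1 e2 e3 R R2 s1 s2 s3 tt assms(3)[folded W_def] unfolding c_def by linarith
qed

end
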